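(* If $f(z)=z+\sum_{n\ge2}a_nz^n$ belongs to $\mathcal{H}_{\sigma}$, then $|a_2a_4-a_3^2|\le\frac{3}{2}$.
   Context: $\mathbb{U}=\{z\in\mathbb{C}:|z|<1\}$. $\sigma$ denotes the class of analytic functions $f(z)=z+\sum_{n\ge2}a_nz^n$ on $\mathbb{U}$ that are univalent in $\mathbb{U}$ and whose inverse $g=f^{-1}$ is also univalent in $\mathbb{U}$. $\mathcal{H}_{\sigma}$ is the set of $f\in\sigma$ with $\operatorname{Re} f'(z)>0$ for $z\in\mathbb{U}$ and $\operatorname{Re} g'(w)>0$ for $w\in\mathbb{U}$, where $g=f^{-1}$ (equivalently, $f'(z)\prec\frac{1+z}{1-z}$ and $g'(w)\prec\frac{1+w}{1-w}$). *)

theory Defs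
  imports "HOL-Analysis.Analysis"
begin

definition unit_disc :: "complex set" where
  "unit_disc = ball 0 1"

definition normalized :: "(complex \<Rightarrow> complex) \<Rightarrow> bool" where
  "normalized f \<longleftrightarrow> f holomorphic_on unit_disc \<and> f 0 = 0 \<and> deriv f 0 = 1"

definition coeff_at0 :: "(complex \<Rightarrow> complex) \<Rightarrow> nat \<Rightarrow> complex" where
  "coeff_at0 f n = (deriv ^^ n) f 0 / of_nat (fact n)"

text \<open>g is the (analytically continued) inverse of f on the unit disc: g is analytic on
  the disc and agrees with the local inverse of f near 0.\<close>
definition inverse_on_disc :: "(complex \<Rightarrow> complex) \<Rightarrow> (complex \<Rightarrow> complex) \<Rightarrow> bool" where
  "inverse_on_disc f g \<longleftrightarrow> g holomorphic_on unit_disc \<and>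
     (\<exists>e>0. \<forall>w\<in>ball 0 e. g w \<in> unit_disc \<and> f (g w) = w)"

definition bi_univalent :: "(complex \<Rightarrow> complex) \<Rightarrow> bool" where
  "bi_univalent f \<longleftrightarrow> normalized f \<and> inj_on f unit_disc \<and>
     (\<exists>g. inverse_on_disc f g \<and> inj_on g unit_disc)"

definition H_sigma :: "(complex \<Rightarrow> complex) \<Rightarrow> bool" where
  "H_sigma f \<longleftrightarrow> normalized f \<and> inj_on f unit_disc \<and>
     (\<forall>z\<in>unit_disc. Re (deriv f z) > 0) \<and>
     (\<exists>g. inverse_on_disc f g \<and> inj_on g unit_disc \<and>
          (\<forall>w\<in>unit_disc. Re (deriv g w) > 0))"

end

theory Submission
  imports Defs "HOL-Complex_Analysis.Complex_Analysis"
begin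

lemma higher_deriv_sum':
  fixes f :: "'i \<Rightarrow> complex \<Rightarrow> complex"
  assumes "finite I" "\<And>i. i \<in> I \<Longrightarrow> f i holomorphic_on S" "open S" "z \<in> S"
  shows "(deriv ^^ n) (\<lambda>w. \<Sum>i\<in>I. f i w) z = (\<Sum>i\<in>I. (deriv ^^ n) (f i) z)"
  using assms(1,2)
proof (induction I rule: finite_induct)
  case empty
  then show ?case by simp
next
  case (insert x F)
  have "(deriv ^^ n) (\<lambda>w. \<Sum>i\<in>insert x F. f i w) z = (deriv ^^ n) (\<lambda>w. f x w + (\<Sum>i\<in>F. f i w)) z"
    using insert by simp
  also have "\<dots> = (deriv ^^ n) (f x) z + (deriv ^^ n) (\<lambda>w. \<Sum>i\<in>F. f i w) z"
    by (rule higher_deriv_add[OF _ _ assms(3,4)]) (use insert in \<open>auto intro!: holomorphic_on_sum\<close>)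
  also have "\<dots> = (\<Sum>i\<in>insert x F. (deriv ^^ n) (f i) z)"
    using insert by simp
  finally show ?case .
qed

lemma schwarz_higher:
  assumes holW: "W holomorphic_on ball 0 1" and bd: "\<And>z. z \<in> ball 0 1 \<Longrightarrow> norm (W z) \<le> 1"
  shows "norm ((deriv ^^ k) W 0) \<le> fact k"
proof -
  have ev: "\<forall>\<^sub>F r in at_left (1::real). norm ((deriv ^^ k) W 0) \<le> fact k * 1 / r ^ k"
  proof -
    have "\<forall>\<^sub>F r in at_left (1::real). r \<in> {0<..<1}"
      by (rule eventually_at_left_real) simp
    then show ?thesis
    proof eventually_elim
      case (elim r)
      have sub: "cball 0 r \<subseteq> ball (0::complex) 1" using elim by auto
      show ?case
      proof (rule Cauchy_inequality)
        show "W holomorphic_on ball 0 r"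
          using holW by (rule holomorphic_on_subset) (use elim in auto)
        show "continuous_on (cball 0 r) W"
          using holomorphic_on_imp_continuous_on[OF holW] sub continuous_on_subset by blast
        show "0 < r" using elim by simp
        fix x :: complex assume "norm (0 - x) = r"
        then show "norm (W x) \<le> 1" using bd elim by auto
      qed
    qed
  qed
  have lim: "((\<lambda>r::real. fact k * 1 / r ^ k) \<longlongrightarrow> fact k * 1 / 1 ^ k) (at_left 1)"
    by (intro tendsto_intros) auto
  have "norm ((deriv ^^ k) W 0) \<le> fact k * 1 / 1 ^ k"
    by (rule tendsto_lowerbound[OF lim ev]) simp
  then show ?thesis by simp
qed

lemma carath:
  fixes p :: "complex \<Rightarrow> complex"
  assumes holp: "p holomorphic_on ball 0 1" and re: "\<And>z. z \<in> ball 0 1 \<Longrightarrow> Re (p z) > 0"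
    and p0: "p 0 = 1" and k: "k \<ge> 1"
  shows "norm ((deriv ^^ k) p 0) \<le> 2 * fact k"
proof -
  define \<omega> :: complex where "\<omega> = exp (2 * of_real pi * \<i> / of_nat k)"
  have om_pow: "\<omega> ^ m = exp (2 * of_real pi * \<i> * of_nat m / of_nat k)" for m
    unfolding \<omega>_def by (simp add: exp_of_nat_mult[symmetric] mult_ac)
  have om1: "\<omega> ^ m = 1 \<longleftrightarrow> k dvd m" for m
    unfolding om_pow using complex_root_unity_eq_1[OF k] by simp
  have nom: "norm \<omega> = 1" unfolding \<omega>_def by (simp add: norm_exp_eq_Re)
  have map: "\<omega> ^ j * z \<in> ball 0 1" if "z \<in> ball 0 1" for j z
    using that by (simp add: norm_mult norm_power nom)
  have holj: "(\<lambda>z. p (\<omega> ^ j * z)) holomorphic_on ball 0 1" for j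
  proof -
    have "(p \<circ> (\<lambda>z. \<omega> ^ j * z)) holomorphic_on ball 0 1"
      by (rule holomorphic_on_compose_gen[where t="ball 0 1"]) (auto intro!: holomorphic_intros holp map)
    then show ?thesis by (simp add: o_def)
  qed
  define q where "q z = (1 / of_nat k) * (\<Sum>j<k. p (\<omega> ^ j * z))" for z
  have holq: "q holomorphic_on ball 0 1"
    unfolding q_def by (intro holomorphic_intros holomorphic_on_sum holj) 
  have dq: "(deriv ^^ m) q 0 = (1 / of_nat k) * (\<Sum>j<k. (\<omega> ^ m) ^ j) * (deriv ^^ m) p 0" for m
  proof -
    have "(deriv ^^ m) q 0 = (1 / of_nat k) * (deriv ^^ m) (\<lambda>z. \<Sum>j<k. p (\<omega> ^ j * z)) 0"
      unfolding q_def[abs_def]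
      by (rule higher_deriv_cmult[where A="ball 0 1"]) (auto intro!: holomorphic_on_sum holj)
    also have "(deriv ^^ m) (\<lambda>z. \<Sum>j<k. p (\<omega> ^ j * z)) 0 = (\<Sum>j<k. (deriv ^^ m) (\<lambda>z. p (\<omega> ^ j * z)) 0)"
      by (rule higher_deriv_sum'[where S="ball 0 1"]) (auto intro: holj)
    also have "\<dots> = (\<Sum>j<k. (\<omega> ^ j) ^ m * (deriv ^^ m) p 0)"
      by (intro sum.cong refl, subst higher_deriv_compose_linear[where S="ball 0 1" and T="ball 0 1"])
         (auto intro: holp simp: norm_mult norm_power nom)
    also have "\<dots> = (\<Sum>j<k. (\<omega> ^ m) ^ j) * (deriv ^^ m) p 0"
      by (simp add: sum_distrib_left sum_distrib_right power_mult[symmetric] mult.commute)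
    finally show ?thesis by simp
  qed
  have dq_lt: "(deriv ^^ m) q 0 = 0" if "1 \<le> m" "m < k" for m
  proof -
    have "\<omega> ^ m \<noteq> 1" using om1 that by (auto dest: dvd_imp_le)
    then have "(\<Sum>j<k. (\<omega> ^ m) ^ j) = ((\<omega> ^ m) ^ k - 1) / (\<omega> ^ m - 1)"
      by (rule geometric_sum)
    also have "(\<omega> ^ m) ^ k = 1" using om1 by (simp add: power_mult[symmetric] mult.commute)
    finally show ?thesis using dq[of m] by simp
  qed
  have dq_k: "(deriv ^^ k) q 0 = (deriv ^^ k) p 0"
  proof -
    have "\<omega> ^ k = 1" using om1 by simp
    then show ?thesis using dq[of k] k by simp
  qed
  have q0: "q 0 = 1" unfolding q_def using p0 k by simp
  have req: "Re (q z) > 0" if "z \<in> ball 0 1" for z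
  proof -
    have "Re (q z) = (1 / real k) * (\<Sum>j<k. Re (p (\<omega> ^ j * z)))"
      unfolding q_def by (simp add: Re_sum)
    moreover have "(\<Sum>j<k. Re (p (\<omega> ^ j * z))) > 0"
      using k by (intro sum_pos) (auto intro!: re map that simp: lessThan_empty_iff)
    ultimately show ?thesis using k by simp
  qed
  have qp1: "q z + 1 \<noteq> 0" if "z \<in> ball 0 1" for z
    using req[OF that] by (auto simp: complex_eq_iff)
  define W where "W z = (q z - 1) * inverse (q z + 1)" for z
  have holv: "(\<lambda>z. inverse (q z + 1)) holomorphic_on ball 0 1"
    by (intro holomorphic_intros holq) (use qp1 in auto)
  have holu: "(\<lambda>z. q z - 1) holomorphic_on ball 0 1"
    by (intro holomorphic_intros holq)
  have holW: "W holomorphic_on ball 0 1"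
    unfolding W_def[abs_def] by (intro holomorphic_intros holq) (use qp1 in auto)
  have bdW: "norm (W z) \<le> 1" if "z \<in> ball 0 1" for z
  proof -
    have "norm (q z - 1) \<le> norm (q z + 1)"
      using req[OF that] by (simp add: cmod_def power2_eq_square algebra_simps)
    moreover have "norm (W z) = norm (q z - 1) / norm (q z + 1)"
      by (simp add: W_def norm_mult norm_inverse divide_inverse)
    moreover have "norm (q z + 1) > 0" using qp1[OF that] by simp
    ultimately show ?thesis by (simp add: divide_le_eq_1)
  qed
  have du: "(deriv ^^ i) (\<lambda>z. q z - 1) 0 = (if i = 0 then 0 else (deriv ^^ i) q 0)" for i
  proof -
    have "(deriv ^^ i) (\<lambda>z. q z - 1) 0 = (deriv ^^ i) q 0 - (deriv ^^ i) (\<lambda>z. 1) 0"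
      by (rule higher_deriv_diff[where S="ball 0 1"]) (auto intro: holq)
    then show ?thesis using q0 by simp
  qed
  have "(deriv ^^ k) W 0 = (\<Sum>i = 0..k. of_nat (k choose i) * (deriv ^^ i) (\<lambda>z. q z - 1) 0 *
                (deriv ^^ (k - i)) (\<lambda>z. inverse (q z + 1)) 0)"
    unfolding W_def[abs_def] by (rule higher_deriv_mult[OF holu holv]) auto
  also have "\<dots> = (\<Sum>i\<in>{k}. of_nat (k choose i) * (deriv ^^ i) (\<lambda>z. q z - 1) 0 *
                (deriv ^^ (k - i)) (\<lambda>z. inverse (q z + 1)) 0)"
    by (rule sum.mono_neutral_right) (auto simp: du dq_lt)
  also have "\<dots> = (deriv ^^ k) p 0 / 2"
    using k q0 by (simp add: du dq_k field_simps)
  finally have "(deriv ^^ k) W 0 = (deriv ^^ k) p 0 / 2" .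
  then have "(deriv ^^ k) p 0 = 2 * (deriv ^^ k) W 0" by (simp add: field_simps)
  then have "norm ((deriv ^^ k) p 0) = 2 * norm ((deriv ^^ k) W 0)" by (simp add: norm_mult)
  with schwarz_higher[OF holW bdW, of k] show ?thesis by simp
qed

lemma coeff_bound:
  assumes "H_sigma f" "n \<ge> 1"
  shows "norm (coeff_at0 f (Suc n)) \<le> 2 / real (Suc n)"
proof -
  have hf: "f holomorphic_on ball 0 1" and d0: "deriv f 0 = 1"
    and re: "\<And>z. z \<in> ball 0 1 \<Longrightarrow> Re (deriv f z) > 0"
    using assms(1) by (auto simp: H_sigma_def normalized_def unit_disc_def)
  have hp: "deriv f holomorphic_on ball 0 1" using hf by (intro holomorphic_deriv) auto
  have bnd: "norm ((deriv ^^ n) (deriv f) 0) \<le> 2 * fact n"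
    by (rule carath[OF hp re d0 assms(2)])
  moreover have "coeff_at0 f (Suc n) = (deriv ^^ n) (deriv f) 0 / of_nat (fact (Suc n))"
    unfolding coeff_at0_def by (simp add: funpow_Suc_right del: funpow.simps)
  then have "norm (coeff_at0 f (Suc n)) = norm ((deriv ^^ n) (deriv f) 0) / fact (Suc n)"
    by (simp only: norm_divide of_nat_fact norm_fact)
  moreover have "norm ((deriv ^^ n) (deriv f) 0) / fact (Suc n) \<le> 2 * fact n / fact (Suc n)"
    by (rule divide_right_mono[OF bnd]) simp
  ultimately have "norm (coeff_at0 f (Suc n)) \<le> 2 * fact n / fact (Suc n)"
    by simp
  also have "(2::real) * fact n / fact (Suc n) = 2 / real (Suc n)"
  proof -
    have fp: "(fact n :: real) > 0" by simp
    have "(2::real) * fact n / fact (Suc n) = (2 * fact n) / (real (Suc n) * fact n)"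
      by (simp only: fact_Suc)
    also have "\<dots> = 2 / real (Suc n)"
      using fp by (intro nonzero_mult_divide_mult_cancel_right) simp
    finally show ?thesis .
  qed
  finally show ?thesis .
qed

theorem corollary4p6:
  fixes f :: "complex \<Rightarrow> complex"
  assumes "H_sigma f"
  shows "cmod (coeff_at0 f 2 * coeff_at0 f 4 - (coeff_at0 f 3)\<^sup>2) \<le> 3 / 2"
proof -
  have a2: "cmod (coeff_at0 f 2) \<le> 1" using coeff_bound[OF assms, of 1] by (simp add: numeral_2_eq_2)
  have a3: "cmod (coeff_at0 f 3) \<le> 2/3" using coeff_bound[OF assms, of 2] by (simp add: numeral_3_eq_3)
  have a4: "cmod (coeff_at0 f 4) \<le> 1/2" using coeff_bound[OF assms, of 3]
    by (simp add: eval_nat_numeral)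
  have "cmod (coeff_at0 f 2 * coeff_at0 f 4 - (coeff_at0 f 3)\<^sup>2)
        \<le> cmod (coeff_at0 f 2) * cmod (coeff_at0 f 4) + cmod (coeff_at0 f 3) ^ 2"
    by (metis norm_mult norm_power norm_triangle_ineq4)
  also have "\<dots> \<le> 1 * (1/2) + (2/3)^2"
    by (intro add_mono mult_mono power_mono a2 a3 a4) auto
  also have "\<dots> \<le> 3/2" by (simp add: power2_eq_square)
  finally show ?thesis .
qed

end
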